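(* In the basic model with $n$ odd, the direction agreement problem can be solved deterministically in $O(1)$ rounds.
   Context: Model (basic): $n>4$ agents are at distinct, arbitrary initial positions on a circle of circumference $1$ and act in synchronised unit-time rounds. Each agent has its own notion of right (clockwise) and left; these need not be consistent across agents. At the start of each round every agent $a$ chooses $\mathrm{dir}_a\in\{\text{right},\text{left}\}$ and moves at unit speed. Agents never pass: two colliding agents instantly reverse direction. There is no communication. At the end of a round each agent learns only the clockwise distance, in its own orientation, from its start-of-round position to its end-of-round position. Agents have distinct IDs in $\{1,\dots,N\}$, $N\ge n$ known, and know the parity of $n$. The direction agreement problem is solved when all agents have a coherent view of which direction is clockwise. *)

theory Defs
  imports Complex_Main
begin

text \<open>
A configuration gives each agent a position
on the circle of circumference 1, represented by a real in [0,1) (clockwise = increasing),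
and its history: the list of distances it has observed so far.
orient a = True iff the local "right" of agent a is the global clockwise direction.
A deterministic protocol is a function alg (ID) (history) returning True = "move right"
(in the agent's own orientation); the output function out (ID) (history) returns
True iff the agent declares its local right to be clockwise.

Agents move at unit speed for unit time, reversing upon collision.
Equivalently (ghost particles), the set of occupied points after the round equals the
set before, and the cyclic order of agents is preserved, with every agent advancing
by r = k - m positions in clockwise cyclic order, where k (m) is the number of agents
that moved clockwise (counterclockwise).
\<close>

definition rank :: "nat \<Rightarrow> (nat \<Rightarrow> real) \<Rightarrow> nat \<Rightarrow> nat" where
  "rank n p a = card {b. b < n \<and> p b < p a}"

definition target :: "nat \<Rightarrow> (nat \<Rightarrow> real) \<Rightarrow> int \<Rightarrow> nat \<Rightarrow> nat" where
  "target n p r a = (THE b. b < n \<and> int (rank n p b) = (int (rank n p a) + r) mod int n)"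

definition round_step ::
  "(nat \<Rightarrow> real list \<Rightarrow> bool) \<Rightarrow> nat \<Rightarrow> (nat \<Rightarrow> nat) \<Rightarrow> (nat \<Rightarrow> bool) \<Rightarrow>
   (nat \<Rightarrow> real) \<times> (nat \<Rightarrow> real list) \<Rightarrow> (nat \<Rightarrow> real) \<times> (nat \<Rightarrow> real list)" where
  "round_step alg n ID orient c =
     (let p = fst c; H = snd c;
          cw = (\<lambda>a. alg (ID a) (H a) = orient a);
          k = card {a. a < n \<and> cw a};
          r = int k - int (n - k);
          tg = target n p r
      in (\<lambda>a. p (tg a),
          \<lambda>a. H a @ [if orient a then frac (p (tg a) - p a) else frac (p a - p (tg a))]))"

definition run ::
  "(nat \<Rightarrow> real list \<Rightarrow> bool) \<Rightarrow> nat \<Rightarrow> (nat \<Rightarrow> nat) \<Rightarrow> (nat \<Rightarrow> bool) \<Rightarrow>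
   (nat \<Rightarrow> real) \<Rightarrow> nat \<Rightarrow> (nat \<Rightarrow> real) \<times> (nat \<Rightarrow> real list)" where
  "run alg n ID orient p0 t = (round_step alg n ID orient ^^ t) (p0, \<lambda>_. [])"

definition solves_direction_agreement ::
  "(nat \<Rightarrow> real list \<Rightarrow> bool) \<Rightarrow> (nat \<Rightarrow> real list \<Rightarrow> bool) \<Rightarrow> nat \<Rightarrow> nat \<Rightarrow> nat \<Rightarrow> bool" where
  "solves_direction_agreement alg out T n N \<longleftrightarrow>
     (\<forall>ID p0 orient.
        inj_on ID {..<n} \<longrightarrow> ID ` {..<n} \<subseteq> {1..N} \<longrightarrow>
        inj_on p0 {..<n} \<longrightarrow> p0 ` {..<n} \<subseteq> {0..<1} \<longrightarrow>
        (let H = snd (run alg n ID orient p0 T) in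
          \<forall>a b. a < n \<longrightarrow> b < n \<longrightarrow>
            ((out (ID a) (H a) = orient a) \<longleftrightarrow> (out (ID b) (H b) = orient b))))"

end

theory Submission
  imports Defs
begin


lemma frac_diff:
  fixes x y :: real
  assumes "0 \<le> x" "x < 1" "0 \<le> y" "y < 1"
  shows "frac (y - x) = (if x \<le> y then y - x else y - x + 1)"
proof (cases "x \<le> y")
  case True
  then show ?thesis using assms by (simp add: frac_eq)
next
  case False
  have "frac (y - x) = frac (y - x + 1)" by (simp add: frac_def)
  also have "\<dots> = y - x + 1" using assms False by (subst frac_eq) auto
  finally show ?thesis using False by simp
qed

lemma key:
  fixes x y z :: real and i jj jk n s :: int
  assumes bx: "0 \<le> x" "x < 1" and "0 \<le> y" "y < 1" "0 \<le> z" "z < 1"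
    and "0 \<le> i" "i < n" "0 \<le> s" "s < n" "odd n"
    and jj: "jj = (i + s) mod n" and jk: "jk = (jj + s) mod n"
    and o1: "x \<le> y \<longleftrightarrow> i \<le> jj" "x < y \<longleftrightarrow> i < jj"
    and o2: "y \<le> z \<longleftrightarrow> jj \<le> jk" "y < z \<longleftrightarrow> jj < jk"
    and o3: "x \<le> z \<longleftrightarrow> i \<le> jk" "x < z \<longleftrightarrow> i < jk"
  shows "(frac (y - x) + frac (z - y) < 1 \<longleftrightarrow> s = 0 \<or> 2 * s < n) \<and>
         (frac (x - y) + frac (y - z) < 1 \<longleftrightarrow> s = 0 \<or> 2 * s > n)"
proof -
  have n2: "2 * s \<noteq> n" using \<open>odd n\<close> by auto
  have modl: "(a + b) mod n = (if a + b < n then a + b else a + b - n)"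
    if "0 \<le> a" "a < n" "0 \<le> b" "b < n" for a b
  proof (cases "a + b < n")
    case True then show ?thesis using that by simp
  next
    case False
    have "(a + b) mod n = (a + b - n) mod n" by (metis mod_add_self2 diff_add_cancel)
    also have "\<dots> = a + b - n" by (rule mod_pos_pos_trivial) (use False that in auto)
    finally show ?thesis using False by simp
  qed
  have JJ: "jj = (if i + s < n then i + s else i + s - n)"
    unfolding jj using assms by (intro modl) auto
  have JJb: "0 \<le> jj" "jj < n" using jj assms by auto
  have JK: "jk = (if jj + s < n then jj + s else jj + s - n)"
    unfolding jk using JJb assms by (intro modl) auto
  show ?thesis
    using bx \<open>0 \<le> y\<close> \<open>y < 1\<close> \<open>0 \<le> z\<close> \<open>z < 1\<close>
      \<open>0 \<le> i\<close> \<open>i < n\<close> \<open>0 \<le> s\<close> \<open>s < n\<close> o1 o2 o3 n2 JJ JK JJb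
    by (simp add: frac_diff) (smt (verit))
qed



lemma rank_less:
  fixes p :: "nat \<Rightarrow> real"
  assumes "a < n" "b < n" "p a < p b"
  shows "rank n p a < rank n p b"
proof -
  have s: "{c. c < n \<and> p c < p a} \<subseteq> {c. c < n \<and> p c < p b}"
    using assms(3) by auto
  have "a \<in> {c. c < n \<and> p c < p b} - {c. c < n \<and> p c < p a}"
    using assms by auto
  then have "{c. c < n \<and> p c < p a} \<subset> {c. c < n \<and> p c < p b}"
    using s by blast
  then show ?thesis unfolding rank_def by (intro psubset_card_mono) auto
qed

lemma rank_lt_n:
  fixes p :: "nat \<Rightarrow> real"
  assumes "a < n"
  shows "rank n p a < n"
proof -
  have "{c. c < n \<and> p c < p a} \<subseteq> {..<n} - {a}" by auto
  then have "rank n p a \<le> card ({..<n} - {a})" unfolding rank_def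
    by (intro card_mono) auto
  then show ?thesis using assms by simp
qed
lemma rank_iff:
  fixes p :: "nat \<Rightarrow> real"
  assumes "inj_on p {..<n}" "a < n" "b < n"
  shows "p a < p b \<longleftrightarrow> rank n p a < rank n p b"
    and "p a = p b \<longleftrightarrow> rank n p a = rank n p b"
    and "p a \<le> p b \<longleftrightarrow> rank n p a \<le> rank n p b"
proof -
  have e: "p a = p b \<longleftrightarrow> a = b" using assms inj_on_eq_iff by (metis lessThan_iff)
  have l1: "p a < p b \<Longrightarrow> rank n p a < rank n p b" using rank_less[of a n b p] assms by blast
  have l2: "p b < p a \<Longrightarrow> rank n p b < rank n p a" using rank_less[of b n a p] assms by blast
  have c: "p a < p b \<or> p a = p b \<or> p b < p a" by linarith
  show "p a < p b \<longleftrightarrow> rank n p a < rank n p b"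
    using c e l1 l2 by (metis less_not_sym order_less_irrefl)
  show "p a = p b \<longleftrightarrow> rank n p a = rank n p b"
    using c e l1 l2 by (metis less_not_sym order_less_irrefl)
  show "p a \<le> p b \<longleftrightarrow> rank n p a \<le> rank n p b"
    using c e l1 l2 by (metis less_not_sym order_less_irrefl not_le order_le_less)
qed

lemma rank_bij:
  fixes p :: "nat \<Rightarrow> real"
  assumes "inj_on p {..<n}"
  shows "bij_betw (rank n p) {..<n} {..<n}"
proof -
  have inj: "inj_on (rank n p) {..<n}"
  proof (rule inj_onI)
    fix a b assume "a \<in> {..<n}" "b \<in> {..<n}" "rank n p a = rank n p b"
    then have "p a = p b" using rank_iff(2)[OF assms] by simp
    then show "a = b" using assms \<open>a \<in> {..<n}\<close> \<open>b \<in> {..<n}\<close> inj_on_eq_iff by metis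
  qed
  have "rank n p ` {..<n} \<subseteq> {..<n}" using rank_lt_n by auto
  then have "rank n p ` {..<n} = {..<n}" using endo_inj_surj inj by blast
  then show ?thesis using inj by (simp add: bij_betw_def)
qed

lemma target_prop:
  fixes p :: "nat \<Rightarrow> real"
  assumes "inj_on p {..<n}" "a < n" 
  shows "target n p r a < n \<and> int (rank n p (target n p r a)) = (int (rank n p a) + r) mod int n"
proof -
  have n: "0 < n" using assms by auto
  let ?v = "nat ((int (rank n p a) + r) mod int n)"
  have "?v < n" using n by (simp add: nat_less_iff)
  then obtain b where b: "b < n" "rank n p b = ?v"
    using rank_bij[OF assms(1)] unfolding bij_betw_def by (metis imageE lessThan_iff)
  have bb: "b < n \<and> int (rank n p b) = (int (rank n p a) + r) mod int n"
    using b n by simp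
  have "target n p r a = b" unfolding target_def
  proof (rule the_equality)
    show "b < n \<and> int (rank n p b) = (int (rank n p a) + r) mod int n" by (rule bb)
  next
    fix c assume "c < n \<and> int (rank n p c) = (int (rank n p a) + r) mod int n"
    then have "c < n" "rank n p c = rank n p b" using bb by auto
    then show "c = b" using rank_iff(2)[OF assms(1)] b assms(1) inj_on_eq_iff
      by (metis lessThan_iff)
  qed
  then show ?thesis using bb by simp
qed

lemma target_bij:
  fixes p :: "nat \<Rightarrow> real"
  assumes "inj_on p {..<n}"
  shows "bij_betw (target n p r) {..<n} {..<n}"
proof -
  have sub: "target n p r ` {..<n} \<subseteq> {..<n}" using target_prop[OF assms] by auto
  have inj: "inj_on (target n p r) {..<n}"
  proof (rule inj_onI)
    fix a b assume a: "a \<in> {..<n}" and b: "b \<in> {..<n}" and e: "target n p r a = target n p r b"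
    have "(int (rank n p a) + r) mod int n = (int (rank n p b) + r) mod int n"
      using target_prop[OF assms, of a r] target_prop[OF assms, of b r] a b e by simp
    then have "(int (rank n p a) + r - r) mod int n = (int (rank n p b) + r - r) mod int n"
      by (metis mod_diff_left_eq)
    then have "int (rank n p a) mod int n = int (rank n p b) mod int n" by simp
    moreover have "rank n p a < n" "rank n p b < n" using a b rank_lt_n by auto
    ultimately have "rank n p a = rank n p b" by simp
    then show "a = b" using rank_iff(2)[OF assms] a b assms inj_on_eq_iff
      by (metis lessThan_iff)
  qed
  have "target n p r ` {..<n} = {..<n}" using endo_inj_surj sub inj by blast
  then show ?thesis using inj by (simp add: bij_betw_def)
qed

lemma rank_comp:
  fixes p :: "nat \<Rightarrow> real"
  assumes "bij_betw f {..<n} {..<n}" "a < n"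
  shows "rank n (\<lambda>x. p (f x)) a = rank n p (f a)"
proof -
  let ?A = "{b. b < n \<and> p (f b) < p (f a)}"
  let ?B = "{c. c < n \<and> p c < p (f a)}"
  have im: "f ` {..<n} = {..<n}" and inj: "inj_on f {..<n}"
    using assms(1) by (auto simp only: bij_betw_def)
  have "f ` ?A = ?B"
  proof
    show "f ` ?A \<subseteq> ?B"
    proof
      fix c assume "c \<in> f ` ?A"
      then obtain b where b: "b \<in> ?A" "c = f b" by blast
      then have "f b \<in> {..<n}" using im by blast
      then show "c \<in> ?B" using b by simp
    qed
  next
    show "?B \<subseteq> f ` ?A"
    proof
      fix c assume c: "c \<in> ?B"
      then have "c \<in> f ` {..<n}" using im by simp
      then obtain b where "b < n" "c = f b" by blast
      then show "c \<in> f ` ?A" using c by blast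
    qed
  qed
  moreover have "inj_on f ?A"
    using inj by (rule inj_on_subset) blast
  ultimately have "card ?A = card ?B" using card_image[of f ?A] by simp
  then show ?thesis unfolding rank_def .
qed


lemma main:
  assumes n4: "4 < n" and odd: "odd n"
  shows "solves_direction_agreement (\<lambda>_ _. True) (\<lambda>_ H. H ! 0 + H ! 1 < (1::real)) 2 n N"
  unfolding solves_direction_agreement_def
proof (intro allI impI)
  fix ID :: "nat \<Rightarrow> nat" and p0 :: "nat \<Rightarrow> real" and orient :: "nat \<Rightarrow> bool"
  assume inj: "inj_on p0 {..<n}" and rng: "p0 ` {..<n} \<subseteq> {0..<1}"
  define k where "k = card {a. a < n \<and> (True = orient a)}"
  define r where "r = int k - int (n - k)"
  define tg1 where "tg1 = target n p0 r"
  define p1 where "p1 = (\<lambda>a. p0 (tg1 a))"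
  define tg2 where "tg2 = target n p1 r"
  define p2 where "p2 = (\<lambda>a. p1 (tg2 a))"
  define D :: "bool \<Rightarrow> real \<Rightarrow> real \<Rightarrow> real"
    where "D = (\<lambda>ori x y. if ori then frac (y - x) else frac (x - y))"
  define s where "s = r mod int n"
  have run: "run (\<lambda>_ _. True) n ID orient p0 2 =
     (p2, \<lambda>a. [D (orient a) (p0 a) (p1 a), D (orient a) (p1 a) (p2 a)])"
    unfolding run_def
    by (simp add: numeral_2_eq_2 round_step_def Let_def k_def r_def
        tg1_def p1_def tg2_def p2_def D_def)
  have n0: "0 < n" using n4 by simp
  have bij1: "bij_betw tg1 {..<n} {..<n}" unfolding tg1_def by (rule target_bij[OF inj])
  have inj1: "inj_on p1 {..<n}"
  proof -
    have "inj_on (p0 \<circ> tg1) {..<n}"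
      using bij1 inj by (intro comp_inj_on) (auto simp: bij_betw_def)
    then show ?thesis by (simp add: p1_def comp_def)
  qed
  have bij2: "bij_betw tg2 {..<n} {..<n}" unfolding tg2_def by (rule target_bij[OF inj1])
  have r0: "0 \<le> p0 a \<and> p0 a < 1" if "a < n" for a using rng that by auto
  have tg1n: "tg1 a < n" if "a < n" for a using target_prop[OF inj that] tg1_def by simp
  have tg2n: "tg2 a < n" if "a < n" for a using target_prop[OF inj1 that] tg2_def by simp
  have s_bd: "0 \<le> s" "s < int n" using n0 by (auto simp: s_def)
  have agent: "(frac (p0 b - p0 a) + frac (p0 c - p0 b) < 1 \<longleftrightarrow> s = 0 \<or> 2 * s < int n) \<and>
         (frac (p0 a - p0 b) + frac (p0 b - p0 c) < 1 \<longleftrightarrow> s = 0 \<or> 2 * s > int n)"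
    if a: "a < n" and bdef: "b = tg1 a" and cdef: "c = tg1 (tg2 a)" for a b c
  proof -
    have bn: "b < n" using bdef tg1n a by simp
    have cn: "c < n" using cdef tg1n tg2n a by simp
    have rb: "int (rank n p0 b) = (int (rank n p0 a) + s) mod int n"
      using target_prop[OF inj a, of r] bdef tg1_def s_def by (simp add: mod_add_right_eq)
    have rk1: "rank n p1 x = rank n p0 (tg1 x)" if "x < n" for x
      unfolding p1_def by (rule rank_comp[OF bij1 that])
    have "int (rank n p1 (tg2 a)) = (int (rank n p1 a) + r) mod int n"
      using target_prop[OF inj1 a, of r] tg2_def by simp
    then have rc: "int (rank n p0 c) = (int (rank n p0 b) + s) mod int n"
      using rk1[OF a] rk1[OF tg2n[OF a]] bdef cdef s_def by (simp add: mod_add_right_eq)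
    show ?thesis
    proof (rule key[where x = "p0 a" and y = "p0 b" and z = "p0 c" and i = "int (rank n p0 a)"
          and jj = "int (rank n p0 b)" and jk = "int (rank n p0 c)" and n = "int n" and s = s])
      show "0 \<le> p0 a" "p0 a < 1" using r0[OF a] by auto
      show "0 \<le> p0 b" "p0 b < 1" using r0[OF bn] by auto
      show "0 \<le> p0 c" "p0 c < 1" using r0[OF cn] by auto
      show "0 \<le> int (rank n p0 a)" by simp
      show "int (rank n p0 a) < int n" using rank_lt_n[OF a] by simp
      show "0 \<le> s" "s < int n" by (rule s_bd)+
      show "odd (int n)" using odd by simp
      show "int (rank n p0 b) = (int (rank n p0 a) + s) mod int n" by (rule rb)
      show "int (rank n p0 c) = (int (rank n p0 b) + s) mod int n" by (rule rc)
      show "(p0 a \<le> p0 b) = (int (rank n p0 a) \<le> int (rank n p0 b))"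
        using rank_iff(3)[OF inj a bn] by simp
      show "(p0 a < p0 b) = (int (rank n p0 a) < int (rank n p0 b))"
        using rank_iff(1)[OF inj a bn] by simp
      show "(p0 b \<le> p0 c) = (int (rank n p0 b) \<le> int (rank n p0 c))"
        using rank_iff(3)[OF inj bn cn] by simp
      show "(p0 b < p0 c) = (int (rank n p0 b) < int (rank n p0 c))"
        using rank_iff(1)[OF inj bn cn] by simp
      show "(p0 a \<le> p0 c) = (int (rank n p0 a) \<le> int (rank n p0 c))"
        using rank_iff(3)[OF inj a cn] by simp
      show "(p0 a < p0 c) = (int (rank n p0 a) < int (rank n p0 c))"
        using rank_iff(1)[OF inj a cn] by simp
    qed
  qed
  have each: "((snd (run (\<lambda>_ _. True) n ID orient p0 2) a ! 0 + snd (run (\<lambda>_ _. True) n ID orient p0 2) a ! 1 < 1)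
      = orient a) \<longleftrightarrow> (if orient a then s = 0 \<or> 2 * s < int n else \<not> (s = 0 \<or> 2 * s > int n))"
    if a: "a < n" for a
  proof -
    have A: "(frac (p1 a - p0 a) + frac (p2 a - p1 a) < 1 \<longleftrightarrow> s = 0 \<or> 2 * s < int n) \<and>
         (frac (p0 a - p1 a) + frac (p1 a - p2 a) < 1 \<longleftrightarrow> s = 0 \<or> 2 * s > int n)"
      unfolding p2_def p1_def by (rule agent[OF a refl refl])
    show ?thesis
    proof (cases "orient a")
      case True
      then show ?thesis using A unfolding run D_def by simp
    next
      case False
      then show ?thesis using A unfolding run D_def by simp
    qed
  qed
  show "let H = snd (run (\<lambda>_ _. True) n ID orient p0 2)
        in \<forall>a b. a < n \<longrightarrow> b < n \<longrightarrow>
          ((H a ! 0 + H a ! 1 < 1) = orient a) = ((H b ! 0 + H b ! 1 < 1) = orient b)"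
    unfolding Let_def
  proof (intro allI impI)
    fix a b assume a: "a < n" and b: "b < n"
    show "((snd (run (\<lambda>_ _. True) n ID orient p0 2) a ! 0 + snd (run (\<lambda>_ _. True) n ID orient p0 2) a ! 1 < 1) = orient a) =
          ((snd (run (\<lambda>_ _. True) n ID orient p0 2) b ! 0 + snd (run (\<lambda>_ _. True) n ID orient p0 2) b ! 1 < 1) = orient b)"
    proof (cases "orient a = orient b")
      case True
      then show ?thesis using each[OF a] each[OF b] by simp
    next
      case False
      let ?S = "{a. a < n \<and> (True = orient a)}"
      have sub: "?S \<subseteq> {..<n}" by auto
      have "a \<in> ?S \<or> b \<in> ?S" using False a b by auto
      then have "?S \<noteq> {}" by blast
      moreover have "finite ?S" by (rule finite_subset[OF sub]) simp
      ultimately have k1: "1 \<le> k" unfolding k_def by (simp add: Suc_le_eq card_gt_0_iff)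
      have "a \<notin> ?S \<or> b \<notin> ?S" using False by auto
      then have "?S \<subset> {..<n}" using sub a b by auto
      then have k2: "k < n" unfolding k_def using psubset_card_mono[of "{..<n}" ?S] by simp
      have rr: "r = 2 * int k - int n" using k2 by (simp add: r_def)
      have "2 * int k \<noteq> int n" using odd by (metis even_mult_iff even_numeral even_of_nat)
      then have sn0: "s \<noteq> 0"
      proof -
        assume ne: "2 * int k \<noteq> int n"
        show "s \<noteq> 0"
        proof (cases "r \<ge> 0")
          case True
          have "r < int n" using rr k2 by simp
          then have "s = r" unfolding s_def by (rule mod_pos_pos_trivial[OF True])
          then show ?thesis using ne rr by simp
        next
          case False
          have b1: "0 \<le> r + int n" "r + int n < int n" using False rr k1 by auto
          have "s = (r + int n) mod int n" unfolding s_def by simp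
          also have "\<dots> = r + int n" by (rule mod_pos_pos_trivial[OF b1])
          finally have "s = r + int n" .
          then show ?thesis using False rr k1 by simp
        qed
      qed
      have "2 * s \<noteq> int n" using odd by (metis even_mult_iff even_numeral even_of_nat)
      then show ?thesis using each[OF a] each[OF b] sn0 False by auto
    qed
  qed
qed

theorem proposition2:
  shows "\<exists>C::nat. \<forall>N::nat. \<exists>alg out T. T \<le> C \<and>
           (\<forall>n. 4 < n \<and> n \<le> N \<and> odd n \<longrightarrow> solves_direction_agreement alg out T n N)"
proof (intro exI[of _ 2] allI)
  fix N :: nat
  show "\<exists>alg out T. T \<le> 2 \<and>
           (\<forall>n. 4 < n \<and> n \<le> N \<and> odd n \<longrightarrow> solves_direction_agreement alg out T n N)"
    using main by blast
qed

end
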